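(* (1) Let $n,m\ge1$, let $A_1,\dots,A_m$ be invertible real $n\times n$ matrices and $B_1,\dots,B_m$ real matrices with $n$ rows, and consider the switched linear control system $x_k=A_{i_k}x_{k-1}+B_{i_k}u_k$, $k\ge1$. If this system is controllable, then there exists a controllable sequence of length $k\le \frac{n(n+1)}{2}$. (2) For all integers $n\ge1$ and $m\ge1$ there exist invertible real $n\times n$ matrices $A_1,\dots,A_m$ and real matrices $B_1,\dots,B_m$ with $n$ rows such that the corresponding switched linear control system is controllable and its shortest controllable sequences have length (a) $n+\frac{m(m-1)}{2}$ if $m\le n$; (b) $\frac{n(n+1)}{2}$ if $m>n$.
   Context: $\Sigma=\{1,\dots,m\}$, $\Sigma^*$ is the set of finite words over $\Sigma$. For $\pi=i_1\cdots i_k\in\Sigma^*$, $\mathcal{R}(\pi)=\mathrm{Im}(A_{i_k}\cdots A_{i_2}B_{i_1},\dots,A_{i_k}B_{i_{k-1}},B_{i_k})$ is the set of states reachable at time $k$ from $x_0=0$ with switching sequence $i_1,\dots,i_k$ and arbitrary inputs. A sequence $\pi$ is controllable if $\mathcal{R}(\pi)=\mathbb{R}^n$; its length is the number of symbols. The system is controllable if $\bigcup_{\pi\in\Sigma^*}\mathcal{R}(\pi)=\mathbb{R}^n$. *)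

theory Defs
  imports "Jordan_Normal_Form.Matrix"
begin

text \<open>Switched linear control system x_k = A_{i_k} x_{k-1} + B_{i_k} u_k on real^n.
  Modes are indexed 0..m-1 (instead of 1..m). A, B :: nat => real mat.\<close>

definition sys_ok :: "nat \<Rightarrow> nat \<Rightarrow> (nat \<Rightarrow> real mat) \<Rightarrow> (nat \<Rightarrow> real mat) \<Rightarrow> bool" where
  "sys_ok n m A B \<longleftrightarrow> n \<ge> 1 \<and> m \<ge> 1 \<and>
     (\<forall>i<m. A i \<in> carrier_mat n n \<and> invertible_mat (A i) \<and> dim_row (B i) = n)"

definition word :: "nat \<Rightarrow> nat list \<Rightarrow> bool" where
  "word m \<pi> \<longleftrightarrow> set \<pi> \<subseteq> {..<m}"

text \<open>Reachable set, on the reversed word (last applied mode first).\<close>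
fun reach_rev :: "(nat \<Rightarrow> real mat) \<Rightarrow> (nat \<Rightarrow> real mat) \<Rightarrow> nat \<Rightarrow> nat list \<Rightarrow> real vec set" where
  "reach_rev A B n [] = {0\<^sub>v n}"
| "reach_rev A B n (i # \<rho>) =
     {A i *\<^sub>v x + B i *\<^sub>v u | x u. x \<in> reach_rev A B n \<rho> \<and> u \<in> carrier_vec (dim_col (B i))}"

definition reach :: "(nat \<Rightarrow> real mat) \<Rightarrow> (nat \<Rightarrow> real mat) \<Rightarrow> nat \<Rightarrow> nat list \<Rightarrow> real vec set" where
  "reach A B n \<pi> = reach_rev A B n (rev \<pi>)"

definition controllable_seq :: "(nat \<Rightarrow> real mat) \<Rightarrow> (nat \<Rightarrow> real mat) \<Rightarrow> nat \<Rightarrow> nat list \<Rightarrow> bool" where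
  "controllable_seq A B n \<pi> \<longleftrightarrow> reach A B n \<pi> = carrier_vec n"

definition controllable_sys :: "(nat \<Rightarrow> real mat) \<Rightarrow> (nat \<Rightarrow> real mat) \<Rightarrow> nat \<Rightarrow> nat \<Rightarrow> bool" where
  "controllable_sys A B n m \<longleftrightarrow> (\<Union>\<pi>\<in>{\<pi>. word m \<pi>}. reach A B n \<pi>) = carrier_vec n"

definition shortest_ctrl_len :: "(nat \<Rightarrow> real mat) \<Rightarrow> (nat \<Rightarrow> real mat) \<Rightarrow> nat \<Rightarrow> nat \<Rightarrow> nat \<Rightarrow> bool" where
  "shortest_ctrl_len A B n m L \<longleftrightarrow>
     (\<exists>\<pi>. word m \<pi> \<and> controllable_seq A B n \<pi> \<and> length \<pi> = L) \<and>
     (\<forall>\<pi>. word m \<pi> \<and> controllable_seq A B n \<pi> \<longrightarrow> L \<le> length \<pi>)"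

end

theory Submission
  imports Defs "HOL-Library.Function_Algebras"
begin

definition sc :: "real \<Rightarrow> (nat \<Rightarrow> real) \<Rightarrow> (nat \<Rightarrow> real)" where
  "sc c f = (\<lambda>i. c * f i)"

interpretation FS: vector_space sc
  by unfold_locales (auto simp: sc_def fun_eq_iff algebra_simps)

interpretation FP: vector_space_pair sc sc ..

fun Rr :: "(nat \<Rightarrow> (nat\<Rightarrow>real) \<Rightarrow> (nat\<Rightarrow>real)) \<Rightarrow> (nat \<Rightarrow> (nat\<Rightarrow>real) set) \<Rightarrow> nat list \<Rightarrow> (nat\<Rightarrow>real) set" where
  "Rr f Bs [] = {0}"
| "Rr f Bs (i#\<rho>) = {f i x + b | x b. x \<in> Rr f Bs \<rho> \<and> b \<in> Bs i}"

fun Mc :: "(nat \<Rightarrow> (nat\<Rightarrow>real) \<Rightarrow> (nat\<Rightarrow>real)) \<Rightarrow> nat list \<Rightarrow> (nat\<Rightarrow>real) \<Rightarrow> (nat\<Rightarrow>real)" where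
  "Mc f [] = id"
| "Mc f (i#\<rho>) = f i \<circ> Mc f \<rho>"

lemma linear_id_sc: "Vector_Spaces.linear sc sc id"
  by (simp add: Vector_Spaces.linear_iff FS.vector_space_axioms)

locale absys =
  fixes f :: "nat \<Rightarrow> (nat\<Rightarrow>real) \<Rightarrow> (nat\<Rightarrow>real)" and Bs :: "nat \<Rightarrow> (nat\<Rightarrow>real) set"
    and m :: nat and Amb :: "(nat\<Rightarrow>real) set" and E :: "(nat \<Rightarrow> real) set"
  assumes finE: "finite E" and Amb: "Amb = FS.span E"
    and lin: "\<And>i. i < m \<Longrightarrow> Vector_Spaces.linear sc sc (f i)"
    and inj: "\<And>i. i < m \<Longrightarrow> inj_on (f i) Amb"
    and into: "\<And>i. i < m \<Longrightarrow> f i ` Amb \<subseteq> Amb"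
    and Bsub: "\<And>i. i < m \<Longrightarrow> FS.subspace (Bs i)"
    and BAmb: "\<And>i. i < m \<Longrightarrow> Bs i \<subseteq> Amb"
    and ctrl: "Amb \<subseteq> (\<Union>\<rho>\<in>{\<rho>. set \<rho> \<subseteq> {..<m}}. Rr f Bs \<rho>)"
begin

lemma subAmb: "FS.subspace Amb"
  using Amb FS.subspace_span by simp

lemma Rr_cons_eq: "Rr f Bs (i#\<rho>) = {x + y |x y. x \<in> f i ` Rr f Bs \<rho> \<and> y \<in> Bs i}"
  by auto

lemma Rr_props: "set \<rho> \<subseteq> {..<m} \<Longrightarrow> FS.subspace (Rr f Bs \<rho>) \<and> Rr f Bs \<rho> \<subseteq> Amb"
proof (induction \<rho>)
  case Nil
  then show ?case using FS.subspace_span[of "{}"] subAmb FS.subspace_0 by auto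
next
  case (Cons i \<rho>)
  then have i: "i < m" and IH: "FS.subspace (Rr f Bs \<rho>)" "Rr f Bs \<rho> \<subseteq> Amb" by auto
  have "FS.subspace (f i ` Rr f Bs \<rho>)"
    using FP.linear_subspace_image[OF lin[OF i] IH(1)] .
  then have s: "FS.subspace (Rr f Bs (i#\<rho>))"
    unfolding Rr_cons_eq using FS.subspace_sums Bsub[OF i] by blast
  have "Rr f Bs (i#\<rho>) \<subseteq> Amb"
  proof
    fix z assume "z \<in> Rr f Bs (i#\<rho>)"
    then obtain x b where z: "z = f i x + b" "x \<in> Rr f Bs \<rho>" "b \<in> Bs i" by auto
    then show "z \<in> Amb" using into[OF i] IH(2) BAmb[OF i] FS.subspace_add[OF subAmb] by blast
  qed
  with s show ?case by blast
qed

lemma Mc_props: "set \<rho> \<subseteq> {..<m} \<Longrightarrow> Vector_Spaces.linear sc sc (Mc f \<rho>) \<and> inj_on (Mc f \<rho>) Amb \<and> Mc f \<rho> ` Amb \<subseteq> Amb"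
proof (induction \<rho>)
  case Nil
  have "Mc f [] = id" by simp
  then show ?case using linear_id_sc by (simp only:) auto
next
  case (Cons i \<rho>)
  have i: "i < m" using Cons.prems by simp
  have sub: "set \<rho> \<subseteq> {..<m}" using Cons.prems by simp
  have IH: "Vector_Spaces.linear sc sc (Mc f \<rho>)" "inj_on (Mc f \<rho>) Amb" "Mc f \<rho> ` Amb \<subseteq> Amb" using Cons.IH[OF sub] by blast+
  have "Vector_Spaces.linear sc sc (f i \<circ> Mc f \<rho>)"
    using Vector_Spaces.linear_compose[OF IH(1) lin[OF i]] .
  moreover have "inj_on (f i \<circ> Mc f \<rho>) Amb"
    using comp_inj_on[OF IH(2)] inj[OF i] IH(3) inj_on_subset by blast
  moreover have "(f i \<circ> Mc f \<rho>) ` Amb \<subseteq> Amb"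
    using IH(3) into[OF i] by (auto simp: image_comp[symmetric]) 
  ultimately show ?case by (simp only: Mc.simps)
qed

lemma Rr_append: "set \<rho> \<subseteq> {..<m} \<Longrightarrow> Rr f Bs (\<rho>@\<tau>) = {a + Mc f \<rho> b | a b. a \<in> Rr f Bs \<rho> \<and> b \<in> Rr f Bs \<tau>}"
proof (induction \<rho>)
  case Nil
  then show ?case by auto
next
  case (Cons i \<rho>)
  have i: "i < m" using Cons.prems by simp
  have sub: "set \<rho> \<subseteq> {..<m}" using Cons.prems by simp
  note IH = Cons.IH[OF sub]
  have la: "\<And>x y. f i (x + y) = f i x + f i y" using FP.linear_add[OF lin[OF i]] .
  show ?case
  proof (rule Set.set_eqI, rule iffI)
    fix z assume "z \<in> Rr f Bs ((i#\<rho>)@\<tau>)"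
    then obtain x c where z: "z = f i x + c" "x \<in> Rr f Bs (\<rho>@\<tau>)" "c \<in> Bs i" by auto
    then obtain a b where x: "x = a + Mc f \<rho> b" "a \<in> Rr f Bs \<rho>" "b \<in> Rr f Bs \<tau>" using IH z(2) by blast
    have "z = (f i a + c) + Mc f (i#\<rho>) b" using z x la by (simp add: algebra_simps)
    moreover have "f i a + c \<in> Rr f Bs (i#\<rho>)" using x z by auto
    ultimately show "z \<in> {a + Mc f (i#\<rho>) b | a b. a \<in> Rr f Bs (i#\<rho>) \<and> b \<in> Rr f Bs \<tau>}" using x by blast
  next
    fix z assume "z \<in> {a + Mc f (i#\<rho>) b | a b. a \<in> Rr f Bs (i#\<rho>) \<and> b \<in> Rr f Bs \<tau>}"
    then obtain a b where z: "z = a + Mc f (i#\<rho>) b" "a \<in> Rr f Bs (i#\<rho>)" "b \<in> Rr f Bs \<tau>" by blast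
    then obtain x c where a: "a = f i x + c" "x \<in> Rr f Bs \<rho>" "c \<in> Bs i" by auto
    have "x + Mc f \<rho> b \<in> Rr f Bs (\<rho>@\<tau>)" using IH a z by blast
    moreover have "z = f i (x + Mc f \<rho> b) + c" using z a la by (simp add: algebra_simps)
    ultimately show "z \<in> Rr f Bs ((i#\<rho>)@\<tau>)" using a by auto
  qed
qed

lemma indep_bound: "FS.independent B \<Longrightarrow> B \<subseteq> Amb \<Longrightarrow> finite B \<and> card B \<le> card E"
  using FS.independent_span_bound[OF finE] Amb by blast

lemma dim_mono': assumes "X \<subseteq> Y" "Y \<subseteq> Amb" shows "FS.dim X \<le> FS.dim Y"
proof -
  obtain C where C: "C \<subseteq> Y" "FS.independent C" "Y \<subseteq> FS.span C" "card C = FS.dim Y"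
    using FS.basis_exists by blast
  have "finite C" using indep_bound C assms by blast
  then show ?thesis using FS.dim_le_card[of X C] C assms by auto
qed

lemma dim_le_E: "X \<subseteq> Amb \<Longrightarrow> FS.dim X \<le> card E"
  using FS.dim_le_card[of X E] finE Amb by auto

lemma dim_eq_sub: assumes "FS.subspace X" "X \<subseteq> Y" "Y \<subseteq> Amb" "FS.dim Y \<le> FS.dim X"
  shows "Y = X"
proof (rule ccontr)
  assume "Y \<noteq> X"
  then obtain y where y: "y \<in> Y" "y \<notin> X" using assms by blast
  obtain B where B: "B \<subseteq> X" "FS.independent B" "X \<subseteq> FS.span B" "card B = FS.dim X"
    using FS.basis_exists by blast
  have "FS.span B \<subseteq> X" using FS.span_minimal B assms by blast
  then have ny: "y \<notin> FS.span B" using y by blast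
  then have ind: "FS.independent (insert y B)" using FS.independent_insertI B by blast
  obtain C where C: "C \<subseteq> Y" "FS.independent C" "Y \<subseteq> FS.span C" "card C = FS.dim Y"
    using FS.basis_exists by blast
  have fC: "finite C" using indep_bound C assms by blast
  have "insert y B \<subseteq> FS.span C" using C y B assms by blast
  then have "card (insert y B) \<le> card C" using FS.independent_span_bound[OF fC ind] by blast
  moreover have "finite B" using indep_bound B assms by blast
  moreover have "y \<notin> B" using ny FS.span_superset by blast
  ultimately show False using B C assms by simp
qed

lemma dim_img: assumes "Vector_Spaces.linear sc sc g" "inj_on g Amb" "X \<subseteq> Amb"
  shows "FS.dim (g ` X) = FS.dim X"
proof -
  obtain B where B: "B \<subseteq> X" "FS.independent B" "X \<subseteq> FS.span B" "card B = FS.dim X"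
    using FS.basis_exists by blast
  have "FS.span B \<subseteq> Amb" using FS.span_minimal B assms subAmb by blast
  then have ij: "inj_on g (FS.span B)" using assms inj_on_subset by blast
  have ind: "FS.independent (g ` B)" using FP.linear_independent_injective_image[OF assms(1) B(2) ij] .
  have "g ` X \<subseteq> FS.span (g ` B)" using FP.linear_span_image[OF assms(1)] B by blast
  then have "card (g ` B) = FS.dim (g ` X)"
    using FS.basis_card_eq_dim[of "g ` B" "g ` X"] B ind by blast
  moreover have "card (g ` B) = card B" using card_image ij FS.span_superset inj_on_subset by metis
  ultimately show ?thesis using B by simp
qed

lemma pigeon: fixes D :: "nat \<Rightarrow> nat" assumes "\<And>k. D k \<le> D (Suc k)" "D (Suc d) \<le> d"
  shows "\<exists>k\<le>d. D k = D (Suc k)"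
proof (rule ccontr)
  assume "\<not> ?thesis"
  then have lt: "\<And>k. k \<le> d \<Longrightarrow> D k < D (Suc k)" using assms(1) le_neq_implies_less by blast
  have "\<And>k. k \<le> Suc d \<Longrightarrow> k \<le> D k"
  proof -
    fix k show "k \<le> Suc d \<Longrightarrow> k \<le> D k"
    proof (induction k)
      case 0 then show ?case by simp
    next
      case (Suc k) then show ?case using lt[of k] by simp
    qed
  qed
  then show False using assms(2) by (metis le_refl not_less_eq_eq)
qed

lemma step:
  assumes w: "set \<rho> \<subseteq> {..<m}" and ne: "Rr f Bs \<rho> \<noteq> Amb"
  shows "\<exists>\<tau>. set \<tau> \<subseteq> {..<m} \<and> length \<tau> \<le> FS.dim (Rr f Bs \<rho>) + 1 \<and> FS.dim (Rr f Bs \<rho>) < FS.dim (Rr f Bs (\<rho>@\<tau>))"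
proof (rule ccontr)
  define V where "V = Rr f Bs \<rho>"
  define d where "d = FS.dim V"
  assume nt: "\<not> ?thesis"
  have H: "FS.dim (Rr f Bs (\<rho>@\<tau>)) \<le> d" if "set \<tau> \<subseteq> {..<m}" "length \<tau> \<le> d+1" for \<tau>
  proof -
    from nt have "\<not> (set \<tau> \<subseteq> {..<m} \<and> length \<tau> \<le> FS.dim (Rr f Bs \<rho>) + 1 \<and> FS.dim (Rr f Bs \<rho>) < FS.dim (Rr f Bs (\<rho>@\<tau>)))"
      by blast
    with that show ?thesis unfolding d_def V_def by simp
  qed
  have Vp: "FS.subspace V" "V \<subseteq> Amb" using Rr_props[OF w] V_def by auto
  have Mp: "Vector_Spaces.linear sc sc (Mc f \<rho>)" "inj_on (Mc f \<rho>) Amb" "Mc f \<rho> ` Amb \<subseteq> Amb"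
    using Mc_props[OF w] by auto
  have M0: "Mc f \<rho> 0 = 0" using FP.linear_0[OF Mp(1)] .
  have MV: "Mc f \<rho> b \<in> V" if a: "set \<tau> \<subseteq> {..<m}" "length \<tau> \<le> d+1" "b \<in> Rr f Bs \<tau>" for \<tau> b
  proof -
    have wt: "set (\<rho>@\<tau>) \<subseteq> {..<m}" using w a by auto
    have z: "0 \<in> Rr f Bs \<tau>" using FS.subspace_0[OF conjunct1[OF Rr_props[OF a(1)]]] .
    have VR: "V \<subseteq> Rr f Bs (\<rho>@\<tau>)"
    proof
      fix x assume "x \<in> V"
      then have "x = x + Mc f \<rho> 0 \<and> x \<in> Rr f Bs \<rho> \<and> 0 \<in> Rr f Bs \<tau>" using M0 z V_def by simp
      then show "x \<in> Rr f Bs (\<rho>@\<tau>)" unfolding Rr_append[OF w] by blast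
    qed
    have "FS.dim (Rr f Bs (\<rho>@\<tau>)) \<le> FS.dim V" using H[OF a(1,2)] d_def by simp
    from dim_eq_sub[OF Vp(1) VR conjunct2[OF Rr_props[OF wt]] this]
    have eq: "Rr f Bs (\<rho>@\<tau>) = V" .
    have "0 \<in> Rr f Bs \<rho>" using FS.subspace_0[OF Vp(1)] V_def by simp
    then have "0 + Mc f \<rho> b \<in> Rr f Bs (\<rho>@\<tau>)" unfolding Rr_append[OF w] using a(3) by blast
    then show ?thesis using eq by simp
  qed
  define Ws where "Ws k = {\<tau>. set \<tau> \<subseteq> {..<m} \<and> length \<tau> \<le> k}" for k
  define U where "U k = FS.span (\<Union>\<tau>\<in>Ws k. Rr f Bs \<tau>)" for k
  have U_Amb: "U k \<subseteq> Amb" for k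
    unfolding U_def
  proof (rule FS.span_minimal[OF _ subAmb], rule UN_least)
    fix \<tau> assume "\<tau> \<in> Ws k"
    then show "Rr f Bs \<tau> \<subseteq> Amb" using Rr_props unfolding Ws_def by blast
  qed
  have U_sub: "FS.subspace (U k)" for k unfolding U_def by (rule FS.subspace_span)
  have U_mono: "U k \<subseteq> U k'" if "k \<le> k'" for k k'
    unfolding U_def by (rule FS.span_mono, rule UN_mono) (use that in \<open>auto simp: Ws_def\<close>)
  have R_U: "Rr f Bs \<tau> \<subseteq> U k" if "set \<tau> \<subseteq> {..<m}" "length \<tau> \<le> k" for \<tau> k
  proof -
    have "\<tau> \<in> Ws k" using that Ws_def by simp
    then have "Rr f Bs \<tau> \<subseteq> (\<Union>\<tau>\<in>Ws k. Rr f Bs \<tau>)" by blast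
    then show ?thesis unfolding U_def using FS.span_superset by blast
  qed
  have U_dim: "FS.dim (U k) \<le> d" if "k \<le> d+1" for k
  proof -
    have "Mc f \<rho> ` (\<Union>\<tau>\<in>Ws k. Rr f Bs \<tau>) \<subseteq> V"
    proof
      fix y assume "y \<in> Mc f \<rho> ` (\<Union>\<tau>\<in>Ws k. Rr f Bs \<tau>)"
      then obtain \<tau> b where tb: "\<tau> \<in> Ws k" "b \<in> Rr f Bs \<tau>" "y = Mc f \<rho> b" by blast
      then have "set \<tau> \<subseteq> {..<m}" "length \<tau> \<le> d+1" using that Ws_def by auto
      then show "y \<in> V" using MV tb by blast
    qed
    from FS.span_minimal[OF this Vp(1)]
    have "Mc f \<rho> ` U k \<subseteq> V" unfolding U_def FP.linear_span_image[OF Mp(1), symmetric] .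
    from dim_mono'[OF this Vp(2)]
    have "FS.dim (Mc f \<rho> ` U k) \<le> d" unfolding d_def .
    then show ?thesis using dim_img[OF Mp(1,2) U_Amb] by simp
  qed
  have mono: "FS.dim (U k) \<le> FS.dim (U (Suc k))" for k by (rule dim_mono'[OF U_mono U_Amb]) simp
  have "FS.dim (U (Suc d)) \<le> d" by (rule U_dim) simp
  from pigeon[of "\<lambda>k. FS.dim (U k)" d, OF mono this]
  obtain k where k: "k \<le> d" "FS.dim (U k) = FS.dim (U (Suc k))" by blast
  have "FS.dim (U (Suc k)) \<le> FS.dim (U k)" using k by simp
  from dim_eq_sub[OF U_sub U_mono U_Amb this]
  have Ueq: "U (Suc k) = U k" by simp
  have all: "Rr f Bs \<tau> \<subseteq> U k" if "set \<tau> \<subseteq> {..<m}" for \<tau>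
    using that
  proof (induction \<tau>)
    case Nil
    show ?case by (rule R_U) auto
  next
    case (Cons i \<tau>)
    have i: "i < m" using Cons.prems by simp
    have sub: "set \<tau> \<subseteq> {..<m}" using Cons.prems by simp
    note IH = Cons.IH[OF sub]
    have b0: "0 \<in> Bs i" using FS.subspace_0[OF Bsub[OF i]] .
    have fimg: "f i ` U k \<subseteq> U (Suc k)"
    proof -
      have "f i ` (\<Union>\<sigma>\<in>Ws k. Rr f Bs \<sigma>) \<subseteq> U (Suc k)"
      proof
        fix y assume "y \<in> f i ` (\<Union>\<sigma>\<in>Ws k. Rr f Bs \<sigma>)"
        then obtain \<sigma> x where sx: "\<sigma> \<in> Ws k" "x \<in> Rr f Bs \<sigma>" "y = f i x" by blast
        have "f i x + 0 \<in> Rr f Bs (i#\<sigma>)" unfolding Rr.simps using sx(2) b0 by blast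
        then have "y \<in> Rr f Bs (i#\<sigma>)" using sx(3) by simp
        moreover have "set (i#\<sigma>) \<subseteq> {..<m}" "length (i#\<sigma>) \<le> Suc k" using sx i Ws_def by auto
        ultimately show "y \<in> U (Suc k)" using R_U by blast
      qed
      from FS.span_minimal[OF this U_sub]
      show ?thesis unfolding U_def[of k] FP.linear_span_image[OF lin[OF i], symmetric] .
    qed
    show ?case
    proof
      fix z assume "z \<in> Rr f Bs (i#\<tau>)"
      then obtain x b where z: "z = f i x + b" "x \<in> Rr f Bs \<tau>" "b \<in> Bs i" by auto
      have "f i x \<in> U (Suc k)" using fimg IH z(2) by blast
      moreover have "b \<in> U (Suc k)"
      proof -
        have "0 \<in> Rr f Bs []" by simp
        then have "f i 0 + b \<in> Rr f Bs [i]" using z(3) by auto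
        moreover have "f i 0 = 0" using FP.linear_0[OF lin[OF i]] .
        ultimately have "b \<in> Rr f Bs [i]" by simp
        moreover have "Rr f Bs [i] \<subseteq> U (Suc k)" by (rule R_U) (use i in auto)
        ultimately show ?thesis by blast
      qed
      ultimately have "z \<in> U (Suc k)" using z(1) FS.subspace_add[OF U_sub] by simp
      then show "z \<in> U k" using Ueq by simp
    qed
  qed
  have "Amb \<subseteq> U k"
  proof
    fix x assume "x \<in> Amb"
    then obtain \<tau> where "set \<tau> \<subseteq> {..<m}" "x \<in> Rr f Bs \<tau>" using ctrl by blast
    then show "x \<in> U k" using all by blast
  qed
  from dim_mono'[OF this U_Amb]
  have "FS.dim Amb \<le> FS.dim (U k)" .
  moreover have "FS.dim (U k) \<le> d" by (rule U_dim) (use k in simp)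
  ultimately have "FS.dim Amb \<le> FS.dim V" unfolding d_def by simp
  from dim_eq_sub[OF Vp(1) Vp(2) order_refl this]
  have "Amb = V" .
  then show False using ne V_def by simp
qed

lemma main: "\<exists>\<rho>. set \<rho> \<subseteq> {..<m} \<and> Rr f Bs \<rho> = Amb \<and> 2 * length \<rho> \<le> card E * (card E + 1)"
proof -
  have gen: "\<exists>\<rho>. set \<rho> \<subseteq> {..<m} \<and> d \<le> FS.dim (Rr f Bs \<rho>) \<and> 2 * length \<rho> \<le> d * (d+1)"
    if "d \<le> FS.dim Amb" for d
    using that
  proof (induction d)
    case 0
    show ?case by (rule exI[of _ "[]"]) simp
  next
    case (Suc d)
    then obtain \<rho> where r: "set \<rho> \<subseteq> {..<m}" "d \<le> FS.dim (Rr f Bs \<rho>)" "2 * length \<rho> \<le> d * (d+1)"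
      by auto
    show ?case
    proof (cases "Suc d \<le> FS.dim (Rr f Bs \<rho>)")
      case True
      then show ?thesis using r by (intro exI[of _ \<rho>]) auto
    next
      case False
      then have dd: "FS.dim (Rr f Bs \<rho>) = d" using r by simp
      have "Rr f Bs \<rho> \<noteq> Amb" using dd Suc.prems by auto
      then obtain \<tau> where t: "set \<tau> \<subseteq> {..<m}" "length \<tau> \<le> d + 1" "d < FS.dim (Rr f Bs (\<rho>@\<tau>))"
        using step[OF r(1)] dd by auto
      have "2 * length (\<rho>@\<tau>) \<le> Suc d * (Suc d + 1)" using r(3) t(2) by simp
      then show ?thesis using r t by (intro exI[of _ "\<rho>@\<tau>"]) auto
    qed
  qed
  obtain \<rho> where r: "set \<rho> \<subseteq> {..<m}" "FS.dim Amb \<le> FS.dim (Rr f Bs \<rho>)" "2 * length \<rho> \<le> FS.dim Amb * (FS.dim Amb + 1)"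
    using gen[OF order_refl] by blast
  have eq: "Amb = Rr f Bs \<rho>" using dim_eq_sub Rr_props[OF r(1)] r(2) by blast
  have "FS.dim Amb \<le> card E" using dim_le_E by simp
  then have "FS.dim Amb * (FS.dim Amb + 1) \<le> card E * (card E + 1)" by (intro mult_mono) auto
  then show ?thesis using r eq by (intro exI[of _ \<rho>]) auto
qed

end

definition emb :: "nat \<Rightarrow> real vec \<Rightarrow> (nat \<Rightarrow> real)" where
  "emb n v = (\<lambda>i. if i < n then v $ i else 0)"

definition linA :: "nat \<Rightarrow> real mat \<Rightarrow> (nat\<Rightarrow>real) \<Rightarrow> (nat\<Rightarrow>real)" where
  "linA n M g = (\<lambda>i. if i < n then (\<Sum>j<n. M $$ (i,j) * g j) else 0)"

definition Bsp :: "nat \<Rightarrow> real mat \<Rightarrow> (nat\<Rightarrow>real) set" where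
  "Bsp n M = emb n ` {M *\<^sub>v u | u. u \<in> carrier_vec (dim_col M)}"

definition Ebas :: "nat \<Rightarrow> (nat \<Rightarrow> real) set" where
  "Ebas n = (\<lambda>j. (\<lambda>i. if i = j then 1 else 0)) ` {..<n}"

lemma emb_inj: "v \<in> carrier_vec n \<Longrightarrow> w \<in> carrier_vec n \<Longrightarrow> emb n v = emb n w \<Longrightarrow> v = w"
proof (rule eq_vecI)
  assume a: "v \<in> carrier_vec n" "w \<in> carrier_vec n" "emb n v = emb n w"
  fix i assume "i < dim_vec w" then have "i < n" using a by simp
  from fun_cong[OF a(3), of i] this show "v $ i = w $ i" by (simp add: emb_def)
next
  assume a: "v \<in> carrier_vec n" "w \<in> carrier_vec n" "emb n v = emb n w"
  then show "dim_vec v = dim_vec w" by simp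
qed

lemma emb_add: "v \<in> carrier_vec n \<Longrightarrow> w \<in> carrier_vec n \<Longrightarrow> emb n (v + w) = emb n v + emb n w"
  unfolding emb_def by (auto simp: fun_eq_iff)

lemma emb_smult: "v \<in> carrier_vec n \<Longrightarrow> emb n (c \<cdot>\<^sub>v v) = sc c (emb n v)"
  unfolding emb_def sc_def by (auto simp: fun_eq_iff)

lemma emb_zero: "emb n (0\<^sub>v n) = 0"
  unfolding emb_def by (auto simp: fun_eq_iff)

lemma emb_mult: assumes "M \<in> carrier_mat n n" "x \<in> carrier_vec n"
  shows "emb n (M *\<^sub>v x) = linA n M (emb n x)"
  unfolding emb_def linA_def fun_eq_iff
proof (intro allI)
  fix i
  show "(if i < n then (M *\<^sub>v x) $ i else 0) = (if i < n then \<Sum>j<n. M $$ (i, j) * (if j < n then x $ j else 0) else 0)"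
  proof (cases "i < n")
    case True
    then have "(M *\<^sub>v x) $ i = (\<Sum>j\<in>{0..<n}. M $$ (i, j) * x $ j)"
      using assms by (simp add: scalar_prod_def)
    also have "\<dots> = (\<Sum>j<n. M $$ (i, j) * (if j < n then x $ j else 0))"
      by (simp add: lessThan_atLeast0)
    finally show ?thesis using True by simp
  qed simp
qed

definition supp_n :: "nat \<Rightarrow> (nat \<Rightarrow> real) set" where
  "supp_n n = {g. \<forall>i\<ge>n. g i = 0}"

lemma supp_n_emb: "supp_n n = emb n ` carrier_vec n"
proof
  show "supp_n n \<subseteq> emb n ` carrier_vec n"
  proof
    fix g assume "g \<in> supp_n n"
    then have "g = emb n (vec n g)" unfolding supp_n_def emb_def by (auto simp: fun_eq_iff)
    moreover have "vec n g \<in> carrier_vec n" by simp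
    ultimately show "g \<in> emb n ` carrier_vec n" by blast
  qed
  show "emb n ` carrier_vec n \<subseteq> supp_n n"
    unfolding supp_n_def emb_def by (rule image_subsetI) simp
qed

lemma subspace_supp_n: "FS.subspace (supp_n n)"
  unfolding FS.subspace_def
proof (intro conjI ballI allI)
  show "0 \<in> supp_n n" unfolding supp_n_def by simp
  fix x y assume "x \<in> supp_n n" "y \<in> supp_n n"
  then show "x + y \<in> supp_n n" unfolding supp_n_def by simp
next
  fix c x assume "x \<in> supp_n n"
  then show "sc c x \<in> supp_n n" unfolding supp_n_def sc_def by simp
qed

lemma span_Ebas: "FS.span (Ebas n) = supp_n n"
proof
  show "FS.span (Ebas n) \<subseteq> supp_n n"
    by (rule FS.span_minimal[OF _ subspace_supp_n]) (auto simp: Ebas_def supp_n_def)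
  show "supp_n n \<subseteq> FS.span (Ebas n)"
  proof
    fix g assume g: "g \<in> supp_n n"
    have "g = (\<Sum>j<n. sc (g j) (\<lambda>i. if i = j then 1 else 0))"
    proof
      fix i
      have "(\<Sum>j<n. sc (g j) (\<lambda>i. if i = j then 1 else 0)) i = (\<Sum>j<n. g j * (if i = j then 1 else 0))"
        unfolding sc_def by (induction n) auto
      also have "\<dots> = (if i < n then g i else 0)"
        by (simp add: if_distrib[of "\<lambda>x. _ * x"] cong: if_cong)
      also have "\<dots> = g i" using g unfolding supp_n_def by auto
      finally show "g i = (\<Sum>j<n. sc (g j) (\<lambda>i. if i = j then 1 else 0)) i" by simp
    qed
    also have "\<dots> \<in> FS.span (Ebas n)"
      by (intro FS.span_sum FS.span_scale FS.span_base) (auto simp: Ebas_def)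
    finally show "g \<in> FS.span (Ebas n)" .
  qed
qed

lemma linA_linear: "Vector_Spaces.linear sc sc (linA n M)"
  unfolding Vector_Spaces.linear_iff
proof (intro conjI allI)
  show "vector_space sc" by (rule FS.vector_space_axioms)
  show "vector_space sc" by (rule FS.vector_space_axioms)
  fix x y :: "nat \<Rightarrow> real"
  show "linA n M (x + y) = linA n M x + linA n M y"
    unfolding linA_def by (auto simp: fun_eq_iff algebra_simps sum.distrib)
  fix c
  show "linA n M (sc c x) = sc c (linA n M x)"
    unfolding linA_def sc_def by (auto simp: fun_eq_iff algebra_simps sum_distrib_left)
qed

lemma linA_into: "linA n M ` X \<subseteq> supp_n n"
  unfolding linA_def supp_n_def by auto

lemma linA_inj: assumes "M \<in> carrier_mat n n" "invertible_mat M"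
  shows "inj_on (linA n M) (supp_n n)"
proof
  fix g h assume g: "g \<in> supp_n n" and h: "h \<in> supp_n n" and eq: "linA n M g = linA n M h"
  obtain v where v: "v \<in> carrier_vec n" "g = emb n v" using g supp_n_emb by blast
  obtain w where w: "w \<in> carrier_vec n" "h = emb n w" using h supp_n_emb by blast
  have e1: "emb n (M *\<^sub>v v) = linA n M g" using emb_mult[OF assms(1) v(1)] v(2) by simp
  have e2: "emb n (M *\<^sub>v w) = linA n M h" using emb_mult[OF assms(1) w(1)] w(2) by simp
  have "emb n (M *\<^sub>v v) = emb n (M *\<^sub>v w)" using e1 e2 eq by simp
  moreover have "M *\<^sub>v v \<in> carrier_vec n" "M *\<^sub>v w \<in> carrier_vec n" using assms(1) v(1) w(1) by auto
  ultimately have Mvw: "M *\<^sub>v v = M *\<^sub>v w" using emb_inj by blast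
  obtain B where B: "M * B = 1\<^sub>m (dim_row M)" "B * M = 1\<^sub>m (dim_row B)"
    using assms(2) unfolding invertible_mat_def inverts_mat_def by blast
  have "dim_col B = n" using arg_cong[OF B(1), of dim_col] assms(1) by simp
  moreover have "dim_row B = n" using arg_cong[OF B(2), of dim_col] assms(1) by simp
  ultimately have Bc: "B \<in> carrier_mat n n" by auto
  have BM: "B * M = 1\<^sub>m n" using B(2) Bc by simp
  have "B *\<^sub>v (M *\<^sub>v v) = (B * M) *\<^sub>v v" using Bc assms(1) v(1) by simp
  also have "\<dots> = v" using BM v(1) by simp
  finally have 1: "B *\<^sub>v (M *\<^sub>v v) = v" .
  have "B *\<^sub>v (M *\<^sub>v w) = (B * M) *\<^sub>v w" using Bc assms(1) w(1) by simp
  also have "\<dots> = w" using BM w(1) by simp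
  finally have 2: "B *\<^sub>v (M *\<^sub>v w) = w" .
  have "v = B *\<^sub>v (M *\<^sub>v v)" using 1 by simp
  also have "\<dots> = B *\<^sub>v (M *\<^sub>v w)" using Mvw by simp
  also have "\<dots> = w" using 2 by simp
  finally show "g = h" using v(2) w(2) by simp
qed

lemma Bsp_memI: "u \<in> carrier_vec (dim_col M) \<Longrightarrow> emb n (M *\<^sub>v u) \<in> Bsp n M"
  unfolding Bsp_def by (rule imageI) auto

lemma Bsp_memE: "x \<in> Bsp n M \<Longrightarrow> \<exists>u. u \<in> carrier_vec (dim_col M) \<and> x = emb n (M *\<^sub>v u)"
  unfolding Bsp_def by auto

lemma Bsp_sub: assumes "dim_row M = n" shows "FS.subspace (Bsp n M)" "Bsp n M \<subseteq> supp_n n"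
proof -
  have Mc: "M \<in> carrier_mat n (dim_col M)" using assms by (intro carrier_matI) auto
  have Mu: "M *\<^sub>v u \<in> carrier_vec n" for u using assms by (intro carrier_vecI) simp
  show "Bsp n M \<subseteq> supp_n n"
  proof
    fix x assume "x \<in> Bsp n M"
    then obtain u where xu: "x = emb n (M *\<^sub>v u)" using Bsp_memE by blast
    have "emb n (M *\<^sub>v u) \<in> emb n ` carrier_vec n" using Mu[of u] by (rule imageI)
    then show "x \<in> supp_n n" unfolding supp_n_emb xu .
  qed
  show "FS.subspace (Bsp n M)"
    unfolding FS.subspace_def
  proof (intro conjI ballI allI)
    have "M *\<^sub>v 0\<^sub>v (dim_col M) = 0\<^sub>v n" by (rule eq_vecI) (use assms in \<open>auto simp: scalar_prod_def\<close>)
    then have "0 = emb n (M *\<^sub>v 0\<^sub>v (dim_col M))" using emb_zero by simp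
    moreover have "emb n (M *\<^sub>v 0\<^sub>v (dim_col M)) \<in> Bsp n M" by (rule Bsp_memI) simp
    ultimately show "0 \<in> Bsp n M" by simp
  next
    fix x y assume "x \<in> Bsp n M" "y \<in> Bsp n M"
    then obtain u1 u2 where u: "u1 \<in> carrier_vec (dim_col M)" "u2 \<in> carrier_vec (dim_col M)"
      "x = emb n (M *\<^sub>v u1)" "y = emb n (M *\<^sub>v u2)" using Bsp_memE by metis
    have "M *\<^sub>v (u1 + u2) = M *\<^sub>v u1 + M *\<^sub>v u2" by (rule mult_add_distrib_mat_vec[OF Mc u(1,2)])
    then have "emb n (M *\<^sub>v (u1 + u2)) = x + y" using emb_add[OF Mu Mu] u(3,4) by simp
    moreover have "emb n (M *\<^sub>v (u1 + u2)) \<in> Bsp n M" by (rule Bsp_memI) (use u(1,2) in simp)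
    ultimately show "x + y \<in> Bsp n M" by simp
  next
    fix c x assume "x \<in> Bsp n M"
    then obtain u where u: "u \<in> carrier_vec (dim_col M)" "x = emb n (M *\<^sub>v u)" using Bsp_memE by blast
    have "M *\<^sub>v (c \<cdot>\<^sub>v u) = c \<cdot>\<^sub>v (M *\<^sub>v u)" by (rule mult_mat_vec[OF Mc u(1)])
    then have "emb n (M *\<^sub>v (c \<cdot>\<^sub>v u)) = sc c x" using emb_smult[OF Mu] u(2) by simp
    moreover have "emb n (M *\<^sub>v (c \<cdot>\<^sub>v u)) \<in> Bsp n M" by (rule Bsp_memI) (use u(1) in simp)
    ultimately show "sc c x \<in> Bsp n M" by simp
  qed
qed

lemma reach_emb:
  assumes ok: "\<And>i. i < m \<Longrightarrow> A i \<in> carrier_mat n n \<and> dim_row (B i) = n"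
  shows "set \<rho> \<subseteq> {..<m} \<Longrightarrow> reach_rev A B n \<rho> \<subseteq> carrier_vec n \<and>
     emb n ` reach_rev A B n \<rho> = Rr (\<lambda>i. linA n (A i)) (\<lambda>i. Bsp n (B i)) \<rho>"
proof (induction \<rho>)
  case Nil
  then show ?case using emb_zero by auto
next
  case (Cons i \<rho>)
  have i: "i < m" using Cons.prems by simp
  have sub: "set \<rho> \<subseteq> {..<m}" using Cons.prems by simp
  note IH = Cons.IH[OF sub]
  have Ai: "A i \<in> carrier_mat n n" and Bi: "dim_row (B i) = n" using ok[OF i] by auto
  have Bu: "B i *\<^sub>v u \<in> carrier_vec n" for u by (rule carrier_vecI) (use Bi in simp)
  have c: "reach_rev A B n (i#\<rho>) \<subseteq> carrier_vec n"
  proof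
    fix z assume "z \<in> reach_rev A B n (i#\<rho>)"
    then obtain x u where xu: "z = A i *\<^sub>v x + B i *\<^sub>v u" "x \<in> reach_rev A B n \<rho>" by auto
    have "x \<in> carrier_vec n" using xu(2) IH by blast
    then have "A i *\<^sub>v x \<in> carrier_vec n" using Ai by (intro mult_mat_vec_carrier)
    then show "z \<in> carrier_vec n" unfolding xu(1) using Bu by (rule add_carrier_vec)
  qed
  have key: "emb n (A i *\<^sub>v x + B i *\<^sub>v u) = linA n (A i) (emb n x) + emb n (B i *\<^sub>v u)"
    if "x \<in> carrier_vec n" for x u
  proof -
    have "A i *\<^sub>v x \<in> carrier_vec n" using Ai that by (intro mult_mat_vec_carrier)
    then have "emb n (A i *\<^sub>v x + B i *\<^sub>v u) = emb n (A i *\<^sub>v x) + emb n (B i *\<^sub>v u)"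
      using Bu by (rule emb_add)
    also have "emb n (A i *\<^sub>v x) = linA n (A i) (emb n x)" using Ai that by (rule emb_mult)
    finally show ?thesis .
  qed
  have "emb n ` reach_rev A B n (i#\<rho>) = Rr (\<lambda>i. linA n (A i)) (\<lambda>i. Bsp n (B i)) (i#\<rho>)"
  proof (rule Set.set_eqI, rule iffI)
    fix z assume "z \<in> emb n ` reach_rev A B n (i#\<rho>)"
    then obtain x u where xu: "x \<in> reach_rev A B n \<rho>" "u \<in> carrier_vec (dim_col (B i))"
      "z = emb n (A i *\<^sub>v x + B i *\<^sub>v u)" by auto
    have "x \<in> carrier_vec n" using xu IH by blast
    then have "z = linA n (A i) (emb n x) + emb n (B i *\<^sub>v u)" using key xu by simp
    moreover have "emb n x \<in> Rr (\<lambda>i. linA n (A i)) (\<lambda>i. Bsp n (B i)) \<rho>" using IH xu by blast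
    moreover have "emb n (B i *\<^sub>v u) \<in> Bsp n (B i)" using xu unfolding Bsp_def by blast
    ultimately show "z \<in> Rr (\<lambda>i. linA n (A i)) (\<lambda>i. Bsp n (B i)) (i#\<rho>)"
      unfolding Rr.simps by blast
  next
    fix z assume "z \<in> Rr (\<lambda>i. linA n (A i)) (\<lambda>i. Bsp n (B i)) (i#\<rho>)"
    then obtain y b where yb: "z = linA n (A i) y + b" "y \<in> Rr (\<lambda>i. linA n (A i)) (\<lambda>i. Bsp n (B i)) \<rho>"
      "b \<in> Bsp n (B i)" unfolding Rr.simps by blast
    obtain x where x: "x \<in> reach_rev A B n \<rho>" "y = emb n x" using yb(2) IH by blast
    obtain u where u: "u \<in> carrier_vec (dim_col (B i))" "b = emb n (B i *\<^sub>v u)" using yb(3) unfolding Bsp_def by blast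
    have "x \<in> carrier_vec n" using x IH by blast
    then have "z = emb n (A i *\<^sub>v x + B i *\<^sub>v u)" using key u x yb by simp
    moreover have "A i *\<^sub>v x + B i *\<^sub>v u \<in> reach_rev A B n (i#\<rho>)" using x u by auto
    ultimately show "z \<in> emb n ` reach_rev A B n (i#\<rho>)" by blast
  qed
  with c show ?case by blast
qed

theorem part1:
  assumes "sys_ok n m A B" "controllable_sys A B n m"
  shows "\<exists>\<pi>. word m \<pi> \<and> controllable_seq A B n \<pi> \<and> 2 * length \<pi> \<le> n * (n + 1)"
proof -
  have ok: "\<And>i. i < m \<Longrightarrow> A i \<in> carrier_mat n n \<and> dim_row (B i) = n"
    and inv: "\<And>i. i < m \<Longrightarrow> invertible_mat (A i)"
    using assms(1) unfolding sys_ok_def by auto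
  have RE: "reach_rev A B n \<rho> \<subseteq> carrier_vec n \<and> emb n ` reach_rev A B n \<rho> = Rr (\<lambda>i. linA n (A i)) (\<lambda>i. Bsp n (B i)) \<rho>"
    if "set \<rho> \<subseteq> {..<m}" for \<rho>
    apply (rule reach_emb[of m A n B \<rho>])
    using ok that by auto
  have loc: "absys (\<lambda>i. linA n (A i)) (\<lambda>i. Bsp n (B i)) m (supp_n n) (Ebas n)"
  proof (rule absys.intro)
    show "finite (Ebas n)" unfolding Ebas_def by simp
    show "supp_n n = FS.span (Ebas n)" using span_Ebas by simp
    show "\<And>i. i < m \<Longrightarrow> Vector_Spaces.linear sc sc (linA n (A i))" by (rule linA_linear)
    show "\<And>i. i < m \<Longrightarrow> inj_on (linA n (A i)) (supp_n n)" using linA_inj ok inv by blast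
    show "\<And>i. i < m \<Longrightarrow> linA n (A i) ` supp_n n \<subseteq> supp_n n" by (rule linA_into)
    show "\<And>i. i < m \<Longrightarrow> FS.subspace (Bsp n (B i))" using Bsp_sub ok by blast
    show "\<And>i. i < m \<Longrightarrow> Bsp n (B i) \<subseteq> supp_n n" using Bsp_sub ok by blast
    show "supp_n n \<subseteq> (\<Union>\<rho>\<in>{\<rho>. set \<rho> \<subseteq> {..<m}}. Rr (\<lambda>i. linA n (A i)) (\<lambda>i. Bsp n (B i)) \<rho>)"
    proof
      fix g assume "g \<in> supp_n n"
      then obtain v where v: "v \<in> carrier_vec n" "g = emb n v" using supp_n_emb by blast
      then obtain \<pi> where p: "word m \<pi>" "v \<in> reach A B n \<pi>"
        using assms(2) unfolding controllable_sys_def by blast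
      have w: "set (rev \<pi>) \<subseteq> {..<m}" using p(1) unfolding word_def by simp
      have "g \<in> Rr (\<lambda>i. linA n (A i)) (\<lambda>i. Bsp n (B i)) (rev \<pi>)"
        using RE[OF w] p(2) v unfolding reach_def by blast
      then show "g \<in> (\<Union>\<rho>\<in>{\<rho>. set \<rho> \<subseteq> {..<m}}. Rr (\<lambda>i. linA n (A i)) (\<lambda>i. Bsp n (B i)) \<rho>)"
        using w by blast
    qed
  qed
  interpret S: absys "\<lambda>i. linA n (A i)" "\<lambda>i. Bsp n (B i)" m "supp_n n" "Ebas n" by (rule loc)
  obtain \<rho> where r: "set \<rho> \<subseteq> {..<m}" "Rr (\<lambda>i. linA n (A i)) (\<lambda>i. Bsp n (B i)) \<rho> = supp_n n"
    "2 * length \<rho> \<le> card (Ebas n) * (card (Ebas n) + 1)"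
    using S.main by blast
  have cE: "card (Ebas n) \<le> n" unfolding Ebas_def using card_image_le[of "{..<n}"] by simp
  have "card (Ebas n) * (card (Ebas n) + 1) \<le> n * (n + 1)" using cE by (intro mult_mono) auto
  then have len: "2 * length (rev \<rho>) \<le> n * (n + 1)" using r(3) by simp
  have "emb n ` reach_rev A B n \<rho> = emb n ` carrier_vec n" using RE[OF r(1)] r(2) supp_n_emb by simp
  moreover have "reach_rev A B n \<rho> \<subseteq> carrier_vec n" using RE[OF r(1)] by blast
  ultimately have "reach_rev A B n \<rho> = carrier_vec n"
  proof (intro subset_antisym subsetI)
    fix v :: "real vec" assume v: "v \<in> carrier_vec n"
    assume e: "emb n ` reach_rev A B n \<rho> = emb n ` carrier_vec n" and c: "reach_rev A B n \<rho> \<subseteq> carrier_vec n"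
    from e v obtain x where x: "x \<in> reach_rev A B n \<rho>" "emb n x = emb n v" by (metis imageE imageI)
    then have "x = v" using emb_inj c v by blast
    then show "v \<in> reach_rev A B n \<rho>" using x by simp
  qed auto
  then have "controllable_seq A B n (rev \<rho>)" unfolding controllable_seq_def reach_def by simp
  moreover have "word m (rev \<rho>)" using r(1) unfolding word_def by simp
  ultimately show ?thesis using len by blast
qed

definition pmat :: "nat \<Rightarrow> (nat \<Rightarrow> nat) \<Rightarrow> real mat" where
  "pmat n g = mat n n (\<lambda>(i,j). if j = g i then 1 else 0)"

lemma pmat_carrier: "pmat n g \<in> carrier_mat n n"
  unfolding pmat_def by (rule mat_carrier)

lemma pmat_dims[simp]: "dim_row (pmat n g) = n" "dim_col (pmat n g) = n"
  unfolding pmat_def by auto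

lemma pmat_apply: assumes "x \<in> carrier_vec n" "i < n" "g i < n"
  shows "(pmat n g *\<^sub>v x) $ i = x $ (g i)"
proof -
  have "(pmat n g *\<^sub>v x) $ i = (\<Sum>j\<in>{0..<n}. (if j = g i then 1 else 0) * x $ j)"
    using assms unfolding pmat_def by (simp add: scalar_prod_def)
  also have "\<dots> = (\<Sum>j\<in>{0..<n}. if j = g i then x $ (g i) else 0)" by (rule sum.cong) auto
  also have "\<dots> = x $ (g i)" using assms(3) by (simp add: sum.delta)
  finally show ?thesis .
qed

lemma pmat_prod: assumes "\<forall>i<n. g i < n \<and> h (g i) = i"
  shows "pmat n g * pmat n h = 1\<^sub>m n"
proof (rule eq_matI)
  fix i k assume ik: "i < dim_row (1\<^sub>m n :: real mat)" "k < dim_col (1\<^sub>m n :: real mat)"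
  then have i: "i < n" and k: "k < n" by auto
  have "(pmat n g * pmat n h) $$ (i, k) = row (pmat n g) i \<bullet> col (pmat n h) k" using i k by simp
  also have "\<dots> = (\<Sum>j\<in>{0..<n}. (if j = g i then 1 else 0) * (if k = h j then 1 else 0))"
    using i k unfolding pmat_def by (simp add: scalar_prod_def)
  also have "\<dots> = (\<Sum>j\<in>{0..<n}. if j = g i then (if k = h (g i) then 1 else 0) else 0)"
    by (rule sum.cong) auto
  also have "\<dots> = (if k = h (g i) then 1 else 0)" using assms i by (simp add: sum.delta)
  also have "\<dots> = 1\<^sub>m n $$ (i, k)" using assms i k by auto
  finally show "(pmat n g * pmat n h) $$ (i, k) = 1\<^sub>m n $$ (i, k)" .
qed auto

lemma pmat_invertible: assumes "\<forall>i<n. g i < n \<and> h i < n \<and> h (g i) = i \<and> g (h i) = i"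
  shows "invertible_mat (pmat n g)"
  unfolding invertible_mat_def inverts_mat_def
proof (intro conjI exI)
  show "square_mat (pmat n g)" by simp
  show "pmat n g * pmat n h = 1\<^sub>m (dim_row (pmat n g))" using pmat_prod[of n g h] assms by simp
  show "pmat n h * pmat n g = 1\<^sub>m (dim_row (pmat n h))" using pmat_prod[of n h g] assms by simp
qed

definition rr :: "nat \<Rightarrow> nat \<Rightarrow> nat" where "rr n m = n + 1 - min m n"
definition kd :: "nat \<Rightarrow> nat \<Rightarrow> nat \<Rightarrow> nat" where "kd n m i = min i (min m n - 1)"
definition gE :: "nat \<Rightarrow> nat \<Rightarrow> nat" where
  "gE r j = (if j = 0 then r - 1 else if j < r then j - 1 else j)"
definition hE :: "nat \<Rightarrow> nat \<Rightarrow> nat" where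
  "hE r j = (if j = r - 1 then 0 else if j < r - 1 then j + 1 else j)"
definition sw :: "nat \<Rightarrow> nat \<Rightarrow> nat" where
  "sw a j = (if j = a then a + 1 else if j = a + 1 then a else j)"
definition gm :: "nat \<Rightarrow> nat \<Rightarrow> nat \<Rightarrow> nat \<Rightarrow> nat" where
  "gm n m i = (if kd n m i = 0 then gE (rr n m) else sw (rr n m + kd n m i - 2))"
definition hm :: "nat \<Rightarrow> nat \<Rightarrow> nat \<Rightarrow> nat \<Rightarrow> nat" where
  "hm n m i = (if kd n m i = 0 then hE (rr n m) else sw (rr n m + kd n m i - 2))"
definition Asys :: "nat \<Rightarrow> nat \<Rightarrow> nat \<Rightarrow> real mat" where
  "Asys n m i = pmat n (gm n m i)"
definition Bsys :: "nat \<Rightarrow> nat \<Rightarrow> nat \<Rightarrow> real mat" where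
  "Bsys n m i = (if kd n m i = 0 then mat n 1 (\<lambda>(j,l). if j = 0 then 1 else 0) else mat n 0 (\<lambda>_. 0))"
definition Sset :: "nat \<Rightarrow> nat \<Rightarrow> nat \<Rightarrow> nat set" where
  "Sset n m i = (if kd n m i = 0 then {0} else {})"
definition stepT :: "nat \<Rightarrow> nat \<Rightarrow> nat \<Rightarrow> nat set \<Rightarrow> nat set" where
  "stepT n m i T = {j. j < n \<and> gm n m i j \<in> T} \<union> Sset n m i"
fun TT :: "nat \<Rightarrow> nat \<Rightarrow> nat list \<Rightarrow> nat set" where
  "TT n m [] = {}"
| "TT n m (i#\<rho>) = stepT n m i (TT n m \<rho>)"
definition wt :: "nat \<Rightarrow> nat \<Rightarrow> nat \<Rightarrow> nat" where
  "wt n m j = (if j < rr n m then 1 else j + 2 - rr n m)"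
definition phi :: "nat \<Rightarrow> nat \<Rightarrow> nat set \<Rightarrow> nat" where
  "phi n m T = (\<Sum>j<n. if j \<in> T then wt n m j else 0)"

lemma rr_bounds: "1 \<le> n \<Longrightarrow> 1 \<le> m \<Longrightarrow> 1 \<le> rr n m \<and> rr n m \<le> n"
  unfolding rr_def by auto

lemma gm_hm: assumes "1 \<le> n" "1 \<le> m" "j < n"
  shows "gm n m i j < n \<and> hm n m i j < n \<and> hm n m i (gm n m i j) = j \<and> gm n m i (hm n m i j) = j"
proof (cases "kd n m i = 0")
  case True
  have r: "1 \<le> rr n m" "rr n m \<le> n" using rr_bounds assms by auto
  show ?thesis using True r assms unfolding gm_def hm_def gE_def hE_def by auto
next
  case False
  have "kd n m i \<le> min m n - 1" unfolding kd_def by simp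
  then have "rr n m + kd n m i - 2 + 1 < n" using False assms unfolding rr_def by auto
  then show ?thesis using False assms unfolding gm_def hm_def sw_def by auto
qed

lemma Asys_apply: assumes "1 \<le> n" "1 \<le> m" "x \<in> carrier_vec n" "j < n"
  shows "(Asys n m i *\<^sub>v x) $ j = x $ (gm n m i j)"
  unfolding Asys_def using pmat_apply assms gm_hm by blast

lemma Bsys_dims: "dim_row (Bsys n m i) = n" "dim_col (Bsys n m i) = (if kd n m i = 0 then 1 else 0)"
  unfolding Bsys_def by auto

lemma Bsys_apply: assumes "j < n" "u \<in> carrier_vec (dim_col (Bsys n m i))"
  shows "(Bsys n m i *\<^sub>v u) $ j = (if kd n m i = 0 \<and> j = 0 then u $ 0 else 0)"
proof (cases "kd n m i = 0")
  case True
  then have du: "dim_vec u = 1" using assms(2) Bsys_dims by simp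
  have "(Bsys n m i *\<^sub>v u) $ j = row (Bsys n m i) j \<bullet> u" using assms(1) Bsys_dims by simp
  also have "\<dots> = (\<Sum>l\<in>{0..<1}. row (Bsys n m i) j $ l * u $ l)" unfolding scalar_prod_def du ..
  also have "\<dots> = (if j = 0 then 1 else 0) * u $ 0" using True assms(1) unfolding Bsys_def by simp
  finally show ?thesis using True by simp
next
  case False
  then have du: "dim_vec u = 0" using assms(2) Bsys_dims by simp
  have "(Bsys n m i *\<^sub>v u) $ j = row (Bsys n m i) j \<bullet> u" using assms(1) Bsys_dims by simp
  also have "\<dots> = 0" unfolding scalar_prod_def du by simp
  finally show ?thesis using False by simp
qed

lemma ZT: assumes "1 \<le> n" "1 \<le> m"
  shows "x \<in> reach_rev (Asys n m) (Bsys n m) n \<rho> \<Longrightarrow> x \<in> carrier_vec n \<and> (\<forall>j<n. j \<notin> TT n m \<rho> \<longrightarrow> x $ j = 0)"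
proof (induction \<rho> arbitrary: x)
  case Nil
  then show ?case by auto
next
  case (Cons i \<rho>)
  then obtain y u where yu: "x = Asys n m i *\<^sub>v y + Bsys n m i *\<^sub>v u" "y \<in> reach_rev (Asys n m) (Bsys n m) n \<rho>"
    "u \<in> carrier_vec (dim_col (Bsys n m i))" by auto
  have y: "y \<in> carrier_vec n" "\<forall>j<n. j \<notin> TT n m \<rho> \<longrightarrow> y $ j = 0" using Cons.IH[OF yu(2)] by auto
  have Ay: "Asys n m i *\<^sub>v y \<in> carrier_vec n" unfolding Asys_def using pmat_carrier y(1) by (rule mult_mat_vec_carrier)
  have Bu: "Bsys n m i *\<^sub>v u \<in> carrier_vec n" by (rule carrier_vecI) (simp add: Bsys_dims)
  have xc: "x \<in> carrier_vec n" unfolding yu(1) using Ay Bu by (rule add_carrier_vec)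
  have "x $ j = 0" if j: "j < n" "j \<notin> TT n m (i#\<rho>)" for j
  proof -
    have g: "gm n m i j \<notin> TT n m \<rho>" "j \<notin> Sset n m i" using j unfolding TT.simps stepT_def by auto
    have "x $ j = (Asys n m i *\<^sub>v y) $ j + (Bsys n m i *\<^sub>v u) $ j"
      unfolding yu(1) by (rule index_add_vec(1)) (simp add: Bsys_dims j(1))
    also have "(Asys n m i *\<^sub>v y) $ j = y $ (gm n m i j)" using Asys_apply assms y(1) j(1) by blast
    also have "\<dots> = 0" using y(2) g(1) gm_hm assms j(1) by blast
    also have "(Bsys n m i *\<^sub>v u) $ j = 0" using Bsys_apply[OF j(1) yu(3)] g(2) unfolding Sset_def by auto
    finally show ?thesis by simp
  qed
  with xc show ?case by blast
qed

lemma ZR: assumes "1 \<le> n" "1 \<le> m"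
  shows "y \<in> carrier_vec n \<Longrightarrow> (\<forall>j<n. j \<notin> TT n m \<rho> \<longrightarrow> y $ j = 0) \<Longrightarrow> y \<in> reach_rev (Asys n m) (Bsys n m) n \<rho>"
proof (induction \<rho> arbitrary: y)
  case Nil
  then have "y = 0\<^sub>v n" by (intro eq_vecI) auto
  then show ?case by simp
next
  case (Cons i \<rho>)
  define x where "x = vec n (\<lambda>k. if k \<in> TT n m \<rho> then y $ (hm n m i k) else 0)"
  have xc: "x \<in> carrier_vec n" unfolding x_def by simp
  have "\<forall>j<n. j \<notin> TT n m \<rho> \<longrightarrow> x $ j = 0" unfolding x_def by simp
  then have xr: "x \<in> reach_rev (Asys n m) (Bsys n m) n \<rho>" using Cons.IH xc by blast
  have Ax: "(Asys n m i *\<^sub>v x) $ j = (if gm n m i j \<in> TT n m \<rho> then y $ j else 0)" if "j < n" for j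
  proof -
    have "(Asys n m i *\<^sub>v x) $ j = x $ (gm n m i j)" using Asys_apply assms xc that by blast
    also have "\<dots> = (if gm n m i j \<in> TT n m \<rho> then y $ j else 0)"
      unfolding x_def using gm_hm[OF assms that, of i] by simp
    finally show ?thesis .
  qed
  define u where "u = vec (dim_col (Bsys n m i)) (\<lambda>_. y $ 0 - (Asys n m i *\<^sub>v x) $ 0)"
  have uc: "u \<in> carrier_vec (dim_col (Bsys n m i))" unfolding u_def by simp
  have Bu: "(Bsys n m i *\<^sub>v u) $ j = (if kd n m i = 0 \<and> j = 0 then y $ 0 - (Asys n m i *\<^sub>v x) $ 0 else 0)"
    if "j < n" for j
    using Bsys_apply[OF that uc] unfolding u_def by (simp add: Bsys_dims)
  have "y = Asys n m i *\<^sub>v x + Bsys n m i *\<^sub>v u"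
  proof (rule eq_vecI)
    show "dim_vec y = dim_vec (Asys n m i *\<^sub>v x + Bsys n m i *\<^sub>v u)" using Cons.prems(1) by (simp add: Bsys_dims)
    fix j assume "j < dim_vec (Asys n m i *\<^sub>v x + Bsys n m i *\<^sub>v u)"
    then have j: "j < n" by (simp add: Bsys_dims)
    have "(Asys n m i *\<^sub>v x + Bsys n m i *\<^sub>v u) $ j = (Asys n m i *\<^sub>v x) $ j + (Bsys n m i *\<^sub>v u) $ j"
      by (rule index_add_vec(1)) (simp add: Bsys_dims j)
    also have "\<dots> = y $ j"
    proof (cases "kd n m i = 0 \<and> j = 0")
      case True
      then show ?thesis using Bu[OF j] by simp
    next
      case False
      then have "j \<notin> Sset n m i" unfolding Sset_def by auto
      then have "gm n m i j \<notin> TT n m \<rho> \<Longrightarrow> y $ j = 0"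
        using Cons.prems(2) j unfolding TT.simps stepT_def by auto
      then show ?thesis using Bu[OF j] Ax[OF j] False by auto
    qed
    finally show "y $ j = (Asys n m i *\<^sub>v x + Bsys n m i *\<^sub>v u) $ j" by simp
  qed
  then show ?case using xr uc by auto
qed

lemma ctrl_if: assumes "1 \<le> n" "1 \<le> m" "{..<n} \<subseteq> TT n m (rev \<pi>)"
  shows "controllable_seq (Asys n m) (Bsys n m) n \<pi>"
  unfolding controllable_seq_def reach_def
proof
  show "reach_rev (Asys n m) (Bsys n m) n (rev \<pi>) \<subseteq> carrier_vec n" using ZT[OF assms(1,2)] by blast
  show "carrier_vec n \<subseteq> reach_rev (Asys n m) (Bsys n m) n (rev \<pi>)"
    using ZR[OF assms(1,2)] assms(3) by blast
qed

lemma ctrl_only_if: assumes "1 \<le> n" "1 \<le> m" "controllable_seq (Asys n m) (Bsys n m) n \<pi>"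
  shows "{..<n} \<subseteq> TT n m (rev \<pi>)"
proof
  fix j assume "j \<in> {..<n}"
  then have j: "j < n" by simp
  have "unit_vec n j \<in> reach_rev (Asys n m) (Bsys n m) n (rev \<pi>)"
    using assms(3) unfolding controllable_seq_def reach_def by simp
  then have "j \<notin> TT n m (rev \<pi>) \<Longrightarrow> (unit_vec n j :: real vec) $ j = 0" using ZT[OF assms(1,2)] j by blast
  then show "j \<in> TT n m (rev \<pi>)" using j by auto
qed

lemma phi_step: assumes "1 \<le> n" "1 \<le> m"
  shows "phi n m (stepT n m i T) \<le> phi n m T + 1"
proof -
  let ?w = "wt n m" and ?g = "gm n m i" and ?h = "hm n m i" and ?S = "Sset n m i"
  let ?a = "rr n m + kd n m i - 2"
  have r: "1 \<le> rr n m" "rr n m \<le> n" using rr_bounds assms by auto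
  have gh: "\<And>j. j < n \<Longrightarrow> ?g j < n \<and> ?h j < n \<and> ?h (?g j) = j \<and> ?g (?h j) = j"
    using gm_hm assms by blast
  have "phi n m (stepT n m i T) \<le> (\<Sum>j<n. if ?g j \<in> T then ?w j else 0) + (\<Sum>j<n. if j \<in> ?S then ?w j else 0)"
    unfolding phi_def stepT_def sum.distrib[symmetric] by (rule sum_mono) auto
  also have "(\<Sum>j<n. if ?g j \<in> T then ?w j else 0) = (\<Sum>k<n. if ?g (?h k) \<in> T then ?w (?h k) else 0)"
  proof -
    have "bij_betw ?h {..<n} {..<n}"
      by (rule bij_betw_byWitness[where f'="?g"]) (use gh in auto)
    then show ?thesis by (rule sum.reindex_bij_betw[symmetric])
  qed
  also have "\<dots> = (\<Sum>k<n. if k \<in> T then ?w (?h k) else 0)"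
    by (rule sum.cong) (use gh in auto)
  also have "\<dots> \<le> (\<Sum>k<n. (if k \<in> T then ?w k else 0) + (if kd n m i \<noteq> 0 \<and> k = ?a then 1 else 0))"
  proof (rule sum_mono)
    fix k assume "k \<in> {..<n}"
    then have k: "k < n" by simp
    have "?w (?h k) \<le> ?w k + (if kd n m i \<noteq> 0 \<and> k = ?a then 1 else 0)"
    proof (cases "kd n m i = 0")
      case True
      then show ?thesis using r k unfolding hm_def hE_def wt_def by auto
    next
      case False
      then show ?thesis using r k unfolding hm_def sw_def wt_def by auto
    qed
    then show "(if k \<in> T then ?w (?h k) else 0) \<le> (if k \<in> T then ?w k else 0) + (if kd n m i \<noteq> 0 \<and> k = ?a then 1 else 0)"
      by auto
  qed
  also have "\<dots> = phi n m T + (\<Sum>k<n. if kd n m i \<noteq> 0 \<and> k = ?a then 1 else 0)"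
    unfolding phi_def sum.distrib ..
  finally have 1: "phi n m (stepT n m i T) \<le> phi n m T + (\<Sum>k<n. if kd n m i \<noteq> 0 \<and> k = ?a then 1 else 0) + (\<Sum>j<n. if j \<in> ?S then ?w j else 0)"
    by simp
  have 2: "(\<Sum>k<n. if kd n m i \<noteq> 0 \<and> k = ?a then 1 else 0) + (\<Sum>j<n. if j \<in> ?S then ?w j else 0) \<le> (1::nat)"
  proof (cases "kd n m i = 0")
    case True
    have "(\<Sum>j<n. if j \<in> ?S then ?w j else 0) = (\<Sum>j<n. if j = 0 then ?w j else 0)"
      using True unfolding Sset_def by simp
    also have "\<dots> = ?w 0" using assms(1) by (simp add: sum.delta)
    also have "\<dots> = 1" using r unfolding wt_def by simp
    finally show ?thesis using True by simp
  next
    case False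
    have "(\<Sum>k<n. if kd n m i \<noteq> 0 \<and> k = ?a then 1 else 0) = (\<Sum>k<n. if k = ?a then 1 else (0::nat))"
      using False by simp
    also have "\<dots> \<le> 1" by (simp add: sum.delta)
    finally show ?thesis using False unfolding Sset_def by simp
  qed
  show ?thesis using 1 2 by linarith
qed

lemma phi_TT: assumes "1 \<le> n" "1 \<le> m" shows "phi n m (TT n m \<rho>) \<le> length \<rho>"
proof (induction \<rho>)
  case Nil
  then show ?case unfolding phi_def by simp
next
  case (Cons i \<rho>)
  then show ?case using phi_step[OF assms, of i "TT n m \<rho>"] by simp
qed

lemma phi_full: "{..<n} \<subseteq> T \<Longrightarrow> phi n m T = (\<Sum>j<n. wt n m j)"
  unfolding phi_def by (rule sum.cong) auto

definition ph :: "nat \<Rightarrow> nat list" where "ph c = map Suc [0..<Suc c] @ [0]"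
fun phs :: "nat \<Rightarrow> nat list" where
  "phs 0 = []"
| "phs (Suc c) = ph c @ phs c"
definition wd :: "nat \<Rightarrow> nat \<Rightarrow> nat list" where
  "wd n m = replicate (rr n m) 0 @ phs (n - rr n m)"

lemma TT_rev_fold: "TT n m (rev \<pi>) = fold (stepT n m) \<pi> {}"
  by (induction \<pi> rule: rev_induct) auto

lemma n_rr: "1 \<le> n \<Longrightarrow> 1 \<le> m \<Longrightarrow> n - rr n m = min m n - 1"
  unfolding rr_def by auto

lemma W1: assumes "1 \<le> n" "1 \<le> m" shows "k \<le> rr n m \<Longrightarrow> fold (stepT n m) (replicate k 0) {} = {..<k}"
proof (induction k)
  case 0
  then show ?case by simp
next
  case (Suc k)
  have r: "1 \<le> rr n m" "rr n m \<le> n" using rr_bounds assms by auto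
  have "fold (stepT n m) (replicate (Suc k) 0) {} = stepT n m 0 (fold (stepT n m) (replicate k 0) {})"
  proof -
    have e: "replicate (Suc k) (0::nat) = replicate k 0 @ [0]" by (induct k) auto
    show ?thesis unfolding e fold_append by simp
  qed
  also have "\<dots> = stepT n m 0 {..<k}" using Suc by simp
  also have "\<dots> = {..<Suc k}"
  proof -
    have k0: "kd n m 0 = 0" unfolding kd_def by simp
    have "k < rr n m" using Suc.prems by simp
    then show ?thesis using r k0 unfolding stepT_def gm_def gE_def Sset_def by auto
  qed
  finally show ?case .
qed

lemma W2: assumes "1 \<le> n" "1 \<le> m" "c < n - rr n m"
  shows "s \<le> Suc c \<Longrightarrow> fold (stepT n m) (map Suc [0..<s]) ({..<rr n m} \<union> {rr n m + c + 1..<n})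
     = {..<rr n m - 1} \<union> {rr n m + s - 1} \<union> {rr n m + c + 1..<n}"
proof (induction s)
  case 0
  have r: "1 \<le> rr n m" using rr_bounds assms by auto
  then show ?case by auto
next
  case (Suc s)
  let ?r = "rr n m"
  have r: "1 \<le> ?r" "?r \<le> n" using rr_bounds assms by auto
  have ks: "kd n m (Suc s) = Suc s" using Suc.prems assms(3) n_rr[OF assms(1,2)] unfolding kd_def by auto
  have "fold (stepT n m) (map Suc [0..<Suc s]) ({..<?r} \<union> {?r + c + 1..<n})
      = stepT n m (Suc s) (fold (stepT n m) (map Suc [0..<s]) ({..<?r} \<union> {?r + c + 1..<n}))" by simp
  also have "\<dots> = stepT n m (Suc s) ({..<?r - 1} \<union> {?r + s - 1} \<union> {?r + c + 1..<n})"
    using Suc by simp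
  also have "\<dots> = {..<?r - 1} \<union> {?r + Suc s - 1} \<union> {?r + c + 1..<n}"
  proof -
    have "gm n m (Suc s) = sw (?r + s - 1)" using ks unfolding gm_def by simp
    moreover have "Sset n m (Suc s) = {}" using ks unfolding Sset_def by simp
    moreover have "s \<le> c" "?r + c < n" using Suc.prems assms(3) by auto
    ultimately show ?thesis using r unfolding stepT_def sw_def by auto
  qed
  finally show ?case .
qed

lemma W3: assumes "1 \<le> n" "1 \<le> m" "c < n - rr n m"
  shows "fold (stepT n m) (ph c) ({..<rr n m} \<union> {rr n m + c + 1..<n}) = {..<rr n m} \<union> {rr n m + c..<n}"
proof -
  let ?r = "rr n m"
  have r: "1 \<le> ?r" "?r \<le> n" using rr_bounds assms by auto
  have "fold (stepT n m) (ph c) ({..<?r} \<union> {?r + c + 1..<n})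
     = stepT n m 0 (fold (stepT n m) (map Suc [0..<Suc c]) ({..<?r} \<union> {?r + c + 1..<n}))"
    unfolding ph_def by simp
  also have "\<dots> = stepT n m 0 ({..<?r - 1} \<union> {?r + Suc c - 1} \<union> {?r + c + 1..<n})"
    using W2[OF assms, of "Suc c"] by simp
  also have "\<dots> = {..<?r} \<union> {?r + c..<n}"
  proof -
    have k0: "kd n m 0 = 0" unfolding kd_def by simp
    have "?r + c < n" using assms(3) by auto
    then show ?thesis using r k0 unfolding stepT_def gm_def gE_def Sset_def by auto
  qed
  finally show ?thesis .
qed

lemma W4: assumes "1 \<le> n" "1 \<le> m"
  shows "c \<le> n - rr n m \<Longrightarrow> fold (stepT n m) (phs c) ({..<rr n m} \<union> {rr n m + c..<n}) = {..<n}"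
proof (induction c)
  case 0
  have "rr n m \<le> n" using rr_bounds assms by auto
  then show ?case by auto
next
  case (Suc c)
  have "fold (stepT n m) (phs (Suc c)) ({..<rr n m} \<union> {rr n m + Suc c..<n})
     = fold (stepT n m) (phs c) (fold (stepT n m) (ph c) ({..<rr n m} \<union> {rr n m + c + 1..<n}))"
    by simp
  also have "\<dots> = fold (stepT n m) (phs c) ({..<rr n m} \<union> {rr n m + c..<n})"
    using W3[OF assms, of c] Suc.prems by simp
  also have "\<dots> = {..<n}" using Suc by simp
  finally show ?case .
qed

lemma W5: assumes "1 \<le> n" "1 \<le> m" shows "TT n m (rev (wd n m)) = {..<n}"
proof -
  have r: "rr n m \<le> n" using rr_bounds assms by auto
  have "TT n m (rev (wd n m)) = fold (stepT n m) (phs (n - rr n m)) (fold (stepT n m) (replicate (rr n m) 0) {})"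
    unfolding TT_rev_fold wd_def by simp
  also have "\<dots> = fold (stepT n m) (phs (n - rr n m)) ({..<rr n m} \<union> {rr n m + (n - rr n m)..<n})"
    using W1[OF assms order_refl] r by simp
  also have "\<dots> = {..<n}" using W4[OF assms order_refl] .
  finally show ?thesis .
qed

lemma len_phs: "2 * length (phs c) = c * (c + 3)"
  by (induction c) (auto simp: ph_def algebra_simps)

lemma sum_wt: "2 * (\<Sum>j<rr n m + t. wt n m j) = 2 * rr n m + t * (t + 3)"
proof (induction t)
  case 0
  have "(\<Sum>j<rr n m. wt n m j) = (\<Sum>j<rr n m. 1)" by (rule sum.cong) (auto simp: wt_def)
  then show ?case by simp
next
  case (Suc t)
  have "wt n m (rr n m + t) = t + 2" unfolding wt_def by simp
  then show ?case using Suc by (simp add: algebra_simps)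
qed

lemma wd_word: assumes "1 \<le> n" "1 \<le> m" shows "word m (wd n m)"
proof -
  have ph: "set (phs c) \<subseteq> {..c}" for c
    by (induction c) (auto simp: ph_def)
  have "n - rr n m < m" using n_rr[OF assms] assms by simp
  then have "set (phs (n - rr n m)) \<subseteq> {..<m}" using ph[of "n - rr n m"] by auto
  then show ?thesis unfolding word_def wd_def using assms by auto
qed

lemma part2_sys: assumes "1 \<le> n" "1 \<le> m"
  shows "sys_ok n m (Asys n m) (Bsys n m) \<and> controllable_sys (Asys n m) (Bsys n m) n m
    \<and> shortest_ctrl_len (Asys n m) (Bsys n m) n m (\<Sum>j<n. wt n m j)"
proof (intro conjI)
  show "sys_ok n m (Asys n m) (Bsys n m)"
    unfolding sys_ok_def
  proof (intro conjI allI impI)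
    fix i assume "i < m"
    show "Asys n m i \<in> carrier_mat n n" unfolding Asys_def by (rule pmat_carrier)
    show "invertible_mat (Asys n m i)" unfolding Asys_def
      by (rule pmat_invertible[where h="hm n m i"]) (use gm_hm assms in blast)
    show "dim_row (Bsys n m i) = n" by (rule Bsys_dims(1))
  qed (use assms in auto)
  have wc: "controllable_seq (Asys n m) (Bsys n m) n (wd n m)"
    using ctrl_if[OF assms] W5[OF assms] by simp
  have ww: "word m (wd n m)" using wd_word[OF assms] .
  show "controllable_sys (Asys n m) (Bsys n m) n m"
    unfolding controllable_sys_def
  proof
    show "(\<Union>\<pi>\<in>{\<pi>. word m \<pi>}. reach (Asys n m) (Bsys n m) n \<pi>) \<subseteq> carrier_vec n"
      unfolding reach_def using ZT[OF assms] by blast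
    show "carrier_vec n \<subseteq> (\<Union>\<pi>\<in>{\<pi>. word m \<pi>}. reach (Asys n m) (Bsys n m) n \<pi>)"
      using wc ww unfolding controllable_seq_def by blast
  qed
  have len: "length (wd n m) = (\<Sum>j<n. wt n m j)"
  proof -
    have r: "rr n m \<le> n" using rr_bounds assms by auto
    have "2 * (\<Sum>j<n. wt n m j) = 2 * rr n m + (n - rr n m) * (n - rr n m + 3)"
      using sum_wt[of n m "n - rr n m"] r by simp
    moreover have "2 * length (wd n m) = 2 * rr n m + (n - rr n m) * (n - rr n m + 3)"
      unfolding wd_def using len_phs[of "n - rr n m"] by simp
    ultimately show ?thesis by simp
  qed
  show "shortest_ctrl_len (Asys n m) (Bsys n m) n m (\<Sum>j<n. wt n m j)"
    unfolding shortest_ctrl_len_def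
  proof (intro conjI allI impI)
    show "\<exists>\<pi>. word m \<pi> \<and> controllable_seq (Asys n m) (Bsys n m) n \<pi> \<and> length \<pi> = (\<Sum>j<n. wt n m j)"
      using wc ww len by blast
    fix \<pi> assume p: "word m \<pi> \<and> controllable_seq (Asys n m) (Bsys n m) n \<pi>"
    have "{..<n} \<subseteq> TT n m (rev \<pi>)" using ctrl_only_if[OF assms] p by blast
    then have "phi n m (TT n m (rev \<pi>)) = (\<Sum>j<n. wt n m j)" by (rule phi_full)
    moreover have "phi n m (TT n m (rev \<pi>)) \<le> length (rev \<pi>)" by (rule phi_TT[OF assms])
    ultimately show "(\<Sum>j<n. wt n m j) \<le> length \<pi>" by simp
  qed
qed

lemma sum_wt_val: assumes "1 \<le> n" "1 \<le> m"
  shows "2 * (\<Sum>j<n. wt n m j) = 2 * n + min m n * (min m n - 1)"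
proof -
  obtain t where t: "min m n = Suc t" using assms by (cases "min m n") auto
  have r: "rr n m = n - t" "t < n" using t unfolding rr_def by auto
  have "2 * (\<Sum>j<n. wt n m j) = 2 * rr n m + t * (t + 3)"
    using sum_wt[of n m t] r by simp
  also have "\<dots> = 2 * n + Suc t * t" using r by (simp add: algebra_simps)
  finally show ?thesis using t by simp
qed

theorem theorem2:
  shows "(\<forall>n m A B. sys_ok n m A B \<and> controllable_sys A B n m \<longrightarrow>
            (\<exists>\<pi>. word m \<pi> \<and> controllable_seq A B n \<pi> \<and> 2 * length \<pi> \<le> n * (n + 1)))
       \<and> (\<forall>n m. n \<ge> 1 \<and> m \<ge> 1 \<longrightarrow>
            (\<exists>A B. sys_ok n m A B \<and> controllable_sys A B n m \<and>
               (m \<le> n \<longrightarrow> shortest_ctrl_len A B n m (n + m * (m - 1) div 2)) \<and>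
               (m > n \<longrightarrow> shortest_ctrl_len A B n m (n * (n + 1) div 2))))"
proof (intro conjI allI impI)
  fix n m A B assume "sys_ok n m A B \<and> controllable_sys A B n m"
  then show "\<exists>\<pi>. word m \<pi> \<and> controllable_seq A B n \<pi> \<and> 2 * length \<pi> \<le> n * (n + 1)"
    using part1 by blast
next
  fix n m :: nat assume nm: "n \<ge> 1 \<and> m \<ge> 1"
  then have a: "1 \<le> n" "1 \<le> m" by auto
  note P = part2_sys[OF a]
  note S = sum_wt_val[OF a]
  show "\<exists>A B. sys_ok n m A B \<and> controllable_sys A B n m \<and>
               (m \<le> n \<longrightarrow> shortest_ctrl_len A B n m (n + m * (m - 1) div 2)) \<and>
               (m > n \<longrightarrow> shortest_ctrl_len A B n m (n * (n + 1) div 2))"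
  proof (intro exI conjI impI)
    show "sys_ok n m (Asys n m) (Bsys n m)" using P by blast
    show "controllable_sys (Asys n m) (Bsys n m) n m" using P by blast
  next
    assume "m \<le> n"
    then have "2 * (\<Sum>j<n. wt n m j) = 2 * n + m * (m - 1)" using S by simp
    then have "(\<Sum>j<n. wt n m j) = n + m * (m - 1) div 2" by presburger
    then show "shortest_ctrl_len (Asys n m) (Bsys n m) n m (n + m * (m - 1) div 2)" using P by simp
  next
    assume "m > n"
    then have "2 * (\<Sum>j<n. wt n m j) = 2 * n + n * (n - 1)" using S by simp
    also have "\<dots> = n * (n + 1)" using a by (cases n) (auto simp: algebra_simps)
    finally have "(\<Sum>j<n. wt n m j) = n * (n + 1) div 2" by presburger
    then show "shortest_ctrl_len (Asys n m) (Bsys n m) n m (n * (n + 1) div 2)" using P by simp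
  qed
qed

end
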